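(* Consider the pursuit-evasion problem described in the context, with a fixed final time $T>0$. For every state $\mathbf{x}=(x,y)$ with $\|\mathbf{x}\|>1$ such that $x\le 0$ or $y\ge 1$, the Evader's optimal trajectory starting at $\mathbf{x}$ avoids the constraint, i.e. it never reaches the Proximity Circle $\|\mathbf{x}\|=1$.
   Context: Pursuer-fixed frame: the Evader's relative position $\mathbf{x}(t)=(x(t),y(t))\in\mathbb{R}^2$ evolves as $\dot x=\mu\cos\psi(t)-1$, $\dot y=\mu\sin\psi(t)$, $\mathbf{x}(0)=\mathbf{x}_0$, where $\mu\in(0,1)$ is the Evader/Pursuer speed ratio and the Evader chooses its heading $\psi(t)$. The Proximity Circle is the unit circle $\|\mathbf{x}\|=1$; the capture-avoidance constraint is $\|\mathbf{x}(t)\|\ge 1$ for all $t\in[0,T]$. For a fixed final time $T$, the Evader wishes to maximize $\|\mathbf{x}(T)\|^2$ subject to this constraint. Throughout the paper it is assumed (by symmetry about the $x$-axis) that $y\ge 0$. *)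

theory Defs
  imports "HOL-Analysis.Analysis"
begin

text \<open>Pursuer-fixed frame. The trajectory is the (absolutely continuous) solution of
  xdot = mu cos psi - 1, ydot = mu sin psi, x(0) = x0, written in integral form.\<close>

definition velocity :: "real \<Rightarrow> (real \<Rightarrow> real) \<Rightarrow> real \<Rightarrow> real \<times> real" where
  "velocity mu psi s = (mu * cos (psi s) - 1, mu * sin (psi s))"

definition traj :: "real \<Rightarrow> real \<times> real \<Rightarrow> (real \<Rightarrow> real) \<Rightarrow> real \<Rightarrow> real \<times> real" where
  "traj mu x0 psi t = x0 + integral {0..t} (velocity mu psi)"

definition feasible :: "real \<Rightarrow> real \<times> real \<Rightarrow> real \<Rightarrow> (real \<Rightarrow> real) \<Rightarrow> bool" where
  "feasible mu x0 T psi \<longleftrightarrow>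
     psi measurable_on {0..T} \<and> (\<forall>t\<in>{0..T}. norm (traj mu x0 psi t) \<ge> 1)"

definition optimal :: "real \<Rightarrow> real \<times> real \<Rightarrow> real \<Rightarrow> (real \<Rightarrow> real) \<Rightarrow> bool" where
  "optimal mu x0 T psi \<longleftrightarrow> feasible mu x0 T psi \<and>
     (\<forall>phi. feasible mu x0 T phi \<longrightarrow> (norm (traj mu x0 phi T))^2 \<le> (norm (traj mu x0 psi T))^2)"

end

theory Submission
  imports Defs
begin

definition wv :: "(real \<Rightarrow> real) \<Rightarrow> real \<Rightarrow> real \<times> real" where
  "wv psi s = (cos (psi s), sin (psi s))"

lemma wv_int:
  assumes "psi measurable_on {0..T}"
  shows "wv psi integrable_on {0..T}"
proof -
  have "psi \<in> borel_measurable (lebesgue_on {0..T})"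
    using assms measurable_on_iff_borel_measurable[of "{0..T}" psi] by simp
  then have "wv psi \<in> borel_measurable (lebesgue_on {0..T})"
    unfolding wv_def by measurable
  moreover have "(\<lambda>_. 1::real) integrable_on {0..T}" by (rule integrable_const_ivl)
  ultimately show ?thesis
    by (rule measurable_bounded_by_integrable_imp_integrable) (auto simp: wv_def norm_Pair)
qed

lemma wv_int_sub:
  assumes "psi measurable_on {0..T}" "0 \<le> a" "b \<le> T"
  shows "wv psi integrable_on {a..b}"
  by (rule integrable_on_subinterval[OF wv_int[OF assms(1)]]) (use assms in auto)

lemma traj_eq:
  assumes "psi measurable_on {0..T}" "0 \<le> t" "t \<le> T"
  shows "traj mu x0 psi t = x0 + mu *\<^sub>R integral {0..t} (wv psi) - (t, 0)"
proof -
  have i: "wv psi integrable_on {0..t}" using wv_int_sub[OF assms(1)] assms by auto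
  have i2: "(\<lambda>s. mu *\<^sub>R wv psi s) integrable_on {0..t}"
    using i by (rule integrable_cmul)
  have v: "velocity mu psi = (\<lambda>s. mu *\<^sub>R wv psi s - (1,0))"
    by (auto simp: velocity_def wv_def fun_eq_iff)
  have "integral {0..t} (velocity mu psi) = integral {0..t} (\<lambda>s. mu *\<^sub>R wv psi s) - integral {0..t} (\<lambda>_. (1::real,0::real))"
    unfolding v by (rule integral_diff[OF i2 integrable_const_ivl])
  also have "integral {0..t} (\<lambda>_. (1::real,0::real)) = (t,0)"
    using assms by simp
  finally show ?thesis unfolding traj_def by simp
qed

lemma wv_bound:
  assumes "wv psi integrable_on {a..b}" "a \<le> b"
  shows "norm (integral {a..b} (wv psi)) \<le> b - a"
proof -
  have "norm (integral {a..b} (wv psi)) \<le> integral {a..b} (\<lambda>_. 1::real)"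
    by (rule integral_norm_bound_integral[OF assms(1) integrable_const_ivl]) (auto simp: wv_def norm_Pair)
  then show ?thesis using assms by simp
qed

lemma key_vec:
  fixes a b u :: "real \<times> real"
  assumes "norm u = 1" "norm a \<le> t" "norm b \<le> S - t" "inner u (a + b) \<ge> S"
  shows "a = t *\<^sub>R u"
proof -
  have "inner u a \<le> norm a" using norm_cauchy_schwarz[of u a] assms(1) by simp
  moreover have "inner u b \<le> norm b" using norm_cauchy_schwarz[of u b] assms(1) by simp
  ultimately have ua: "inner u a \<ge> t" using assms(2-4) by (auto simp: inner_add_right)
  have t0: "t \<ge> 0" using assms(2) norm_ge_zero order_trans by blast
  have "(norm (a - t *\<^sub>R u))^2 = inner (a - t *\<^sub>R u) (a - t *\<^sub>R u)"
    by (simp add: power2_norm_eq_inner)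
  also have "\<dots> = inner a a - 2 * t * inner u a + t^2 * inner u u"
    by (simp add: inner_diff_left inner_diff_right inner_commute algebra_simps power2_eq_square)
  also have "\<dots> = (norm a)^2 - 2 * t * inner u a + t^2 * (norm u)^2"
    by (simp add: power2_norm_eq_inner)
  also have "\<dots> \<le> 0"
  proof -
    have "(norm a)^2 \<le> t^2" using assms(2) by (simp add: power_mono)
    moreover have "t * t \<le> t * inner u a" using ua t0 by (simp add: mult_left_mono)
    ultimately show ?thesis using assms(1) by (simp add: power2_eq_square)
  qed
  finally show ?thesis by simp
qed

lemma line_ok:
  fixes a b mu T t n :: real
  assumes "0 < mu" "0 < T" "0 \<le> t" "1 < a^2 + b^2" "a \<le> 0 \<or> b \<ge> 1" "n = sqrt ((a-T)^2 + b^2)" "0 < n"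
  shows "1 < sqrt ((a + mu * t * ((a - T) / n) - t)^2 + (b + mu * t * (b / n))^2)"
proof -
  define p where "p = a + mu * t * ((a - T) / n) - t"
  define q where "q = b + mu * t * (b / n)"
  have "1 < p^2 + q^2"
  proof (cases "b \<ge> 1")
    case True
    show ?thesis
    proof (cases "t = 0")
      case True then show ?thesis using assms by (simp add: p_def q_def)
    next
      case False
      then have "0 < mu * t * (b / n)" using assms \<open>b \<ge> 1\<close> by simp
      then have "1 < q" using \<open>b \<ge> 1\<close> by (simp add: q_def)
      then have "1 < q^2" by (simp add: one_less_power)
      then show ?thesis by (smt (verit) zero_le_power2)
    qed
  next
    case False
    then have a0: "a \<le> 0" using assms(5) by simp
    define v1 where "v1 = mu * ((a - T) / n) - 1"
    define v2 where "v2 = mu * (b / n)"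
    have pe: "p = a + t * v1" by (simp add: p_def v1_def algebra_simps)
    have qe: "q = b + t * v2" by (simp add: q_def v2_def algebra_simps)
    have "a * v1 + b * v2 = mu * (a * (a - T) + b^2) / n - a"
      using assms(7) by (simp add: v1_def v2_def field_simps power2_eq_square)
    moreover have "0 \<le> a * (a - T)" using a0 assms(2) by (simp add: mult_nonpos_nonpos)
    moreover have "0 \<le> mu * (a * (a - T) + b^2) / n"
      using calculation(2) assms(1,7) by (intro divide_nonneg_pos mult_nonneg_nonneg) auto
    ultimately have d: "0 \<le> a * v1 + b * v2" using a0 by linarith
    have "p^2 + q^2 = a^2 + b^2 + 2 * t * (a * v1 + b * v2) + t^2 * (v1^2 + v2^2)"
      by (simp add: pe qe power2_eq_square algebra_simps)
    moreover have "0 \<le> 2 * t * (a * v1 + b * v2)" using d assms(3) by simp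
    moreover have "0 \<le> t^2 * (v1^2 + v2^2)" by simp
    ultimately show ?thesis using assms(4) by linarith
  qed
  then show ?thesis unfolding p_def q_def by (simp add: real_less_rsqrt)
qed


theorem lemma1:
  fixes mu T :: real and x0 :: "real \<times> real"
  assumes "0 < mu" "mu < 1" "0 < T"
    and "norm x0 > 1"
    and "fst x0 \<le> 0 \<or> snd x0 \<ge> 1"
  shows "(\<exists>psi. optimal mu x0 T psi) \<and>
         (\<forall>psi. optimal mu x0 T psi \<longrightarrow> (\<forall>t\<in>{0..T}. norm (traj mu x0 psi t) > 1))"
proof -
  obtain a b where x0: "x0 = (a, b)" by (cases x0)
  have ab: "1 < a^2 + b^2" using assms(4) x0 by (simp add: norm_Pair)

  have ab5: "a \<le> 0 \<or> b \<ge> 1" using assms(5) x0 by simp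
  define n where "n = sqrt ((a-T)^2 + b^2)"
  have "(a-T)^2 + b^2 > 0"
  proof (cases "a \<le> 0")
    case True then have "(a-T)^2 > 0" using assms(3) by simp
    then show ?thesis by (smt (verit) zero_le_power2)
  next
    case False then have "b^2 > 0" using ab5 by simp
    then show ?thesis by (smt (verit) zero_le_power2)
  qed
  then have n0: "0 < n" by (simp add: n_def)
  have nsq: "n^2 = (a-T)^2 + b^2" unfolding n_def by (smt (verit) real_sqrt_pow2 zero_le_power2)
  define u where "u = ((a - T) / n, b / n)"
  have uu: "((a - T) / n)^2 + (b / n)^2 = 1"
  proof -
    have "((a - T) / n)^2 + (b / n)^2 = ((a-T)^2 + b^2) / n^2"
      by (simp add: power_divide add_divide_distrib)
    also have "\<dots> = 1" using n0 by (simp add: nsq[symmetric])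
    finally show ?thesis .
  qed
  have nu: "norm u = 1" unfolding u_def norm_Pair real_norm_def power2_abs using uu by simp
  obtain th where th: "(a - T) / n = cos th" "b / n = sin th"
    using sincos_total_2pi[OF uu] by metis
  define psi0 where "psi0 = (\<lambda>_::real. th)"
  have wv0: "wv psi0 = (\<lambda>_. u)" by (simp add: wv_def psi0_def u_def th fun_eq_iff)
  have m0: "psi0 measurable_on {0..T}" unfolding psi0_def by simp
  have line: "1 < norm (x0 + mu *\<^sub>R (t *\<^sub>R u) - (t, 0))" if "0 \<le> t" for t
  proof -
    have "x0 + mu *\<^sub>R (t *\<^sub>R u) - (t, 0) = (a + mu * t * ((a - T) / n) - t, b + mu * t * (b / n))"
      by (simp add: x0 u_def)
    then show ?thesis
      using line_ok[OF assms(1,3) that ab ab5 n_def n0] by (simp add: norm_Pair)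
  qed
  have tr0: "traj mu x0 psi0 t = x0 + mu *\<^sub>R (t *\<^sub>R u) - (t, 0)" if "0 \<le> t" "t \<le> T" for t
    using traj_eq[OF m0 that] that by (simp add: wv0)
  have cu: "x0 - (T, 0) = n *\<^sub>R u" using n0 by (simp add: x0 u_def)
  have trT: "x0 + mu *\<^sub>R W - (T, 0) = n *\<^sub>R u + mu *\<^sub>R W" for W
    using cu by (simp add: algebra_simps)
  have N0: "norm (traj mu x0 psi0 T) = n + mu * T"
  proof -
    have "traj mu x0 psi0 T = (n + mu * T) *\<^sub>R u"
      using tr0[of T] assms(3) trT[of "T *\<^sub>R u"] by (simp add: algebra_simps)
    then show ?thesis using nu n0 assms(1,3) by simp
  qed
  have feas0: "feasible mu x0 T psi0"
    unfolding feasible_def using m0 tr0 line by (auto intro: less_imp_le)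
  have bnd: "norm (traj mu x0 phi T) \<le> n + mu * T" if "feasible mu x0 T phi" for phi
  proof -
    have m: "phi measurable_on {0..T}" using that feasible_def by blast
    define W where "W = integral {0..T} (wv phi)"
    have W: "norm W \<le> T" using wv_bound[OF wv_int[OF m]] assms(3) by (simp add: W_def)
    have "traj mu x0 phi T = n *\<^sub>R u + mu *\<^sub>R W"
      using traj_eq[OF m, of T] assms(3) trT by (simp add: W_def)
    also have "norm \<dots> \<le> n + mu * T"
      using norm_triangle_ineq[of "n *\<^sub>R u" "mu *\<^sub>R W"] nu n0 assms(1) W
      by (simp add: mult_left_mono) (smt (verit) mult_left_mono)
    finally show ?thesis .
  qed
  have opt0: "optimal mu x0 T psi0"
    unfolding optimal_def using feas0 bnd N0
    by (auto intro!: power_mono simp: n0 assms)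
  have "\<forall>t\<in>{0..T}. norm (traj mu x0 psi t) > 1" if op: "optimal mu x0 T psi" for psi
  proof
    fix t assume t: "t \<in> {0..T}"
    have fe: "feasible mu x0 T psi" using op optimal_def by blast
    have m: "psi measurable_on {0..T}" using fe feasible_def by blast
    have ge: "(n + mu * T)^2 \<le> (norm (traj mu x0 psi T))^2"
      using op feas0 N0 unfolding optimal_def by metis
    define W where "W = integral {0..T} (wv psi)"
    have W: "norm W \<le> T" using wv_bound[OF wv_int[OF m]] assms(3) by (simp add: W_def)
    have tT: "traj mu x0 psi T = n *\<^sub>R u + mu *\<^sub>R W"
      using traj_eq[OF m, of T] assms(3) trT by (simp add: W_def)
    have "(norm (n *\<^sub>R u + mu *\<^sub>R W))^2 = inner (n *\<^sub>R u + mu *\<^sub>R W) (n *\<^sub>R u + mu *\<^sub>R W)"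
      by (simp add: power2_norm_eq_inner)
    also have "\<dots> = n^2 * inner u u + 2 * n * mu * inner u W + mu^2 * inner W W"
      by (simp add: inner_add_left inner_add_right inner_commute algebra_simps power2_eq_square)
    also have "\<dots> = n^2 + 2 * n * mu * inner u W + mu^2 * (norm W)^2"
      using nu by (simp add: power2_norm_eq_inner[symmetric])
    finally have ex: "(norm (n *\<^sub>R u + mu *\<^sub>R W))^2 = n^2 + 2 * n * mu * inner u W + mu^2 * (norm W)^2" .
    have "(norm W)^2 \<le> T^2" using W by (simp add: power_mono)
    then have "mu^2 * (norm W)^2 \<le> mu^2 * T^2" by (simp add: mult_left_mono)
    then have "(n + mu * T)^2 \<le> n^2 + 2 * n * mu * inner u W + mu^2 * T^2"
    proof -
      have "(n + mu * T)^2 \<le> (norm (n *\<^sub>R u + mu *\<^sub>R W))^2" using ge tT by simp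
      then show ?thesis using ex \<open>mu^2 * (norm W)^2 \<le> mu^2 * T^2\<close> by linarith
    qed
    then have "2 * n * mu * T \<le> 2 * n * mu * inner u W"
      by (simp add: power2_eq_square algebra_simps)
    then have uW: "T \<le> inner u W" using n0 assms(1) by simp
    have t0: "0 \<le> t" "t \<le> T" using t by auto
    define A where "A = integral {0..t} (wv psi)"
    define B where "B = integral {t..T} (wv psi)"
    have "A + B = W"
      unfolding A_def B_def W_def
      by (rule Henstock_Kurzweil_Integration.integral_combine[OF t0 wv_int[OF m]])
    moreover have "norm A \<le> t" using wv_bound[OF wv_int_sub[OF m], of 0 t] t0 by (simp add: A_def)
    moreover have "norm B \<le> T - t" using wv_bound[OF wv_int_sub[OF m], of t T] t0 by (simp add: B_def)
    ultimately have "A = t *\<^sub>R u" using key_vec[OF nu, of A t B T] uW by simp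
    then have "traj mu x0 psi t = x0 + mu *\<^sub>R (t *\<^sub>R u) - (t, 0)"
      using traj_eq[OF m t0] by (simp add: A_def)
    then show "norm (traj mu x0 psi t) > 1" using line t0 by simp
  qed
  then show ?thesis using opt0 by blast
qed

end
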